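(* Let $R$ be a unital ring, let $\mathcal{F}_1\subseteq\mathcal{F}_2$ be Gabriel filters of right ideals of $R$, let $\Delta=\{\delta_n\}_{n\in\omega}$ be a higher derivation on $R$, let $M$ be a right $R$-module and $D=\{d_n\}_{n\in\omega}$ a higher $\Delta$-derivation on $M$. For $k=1,2$ let $\{d^{(k)}_n\}_{n\in\omega}$ be the (unique) higher $\Delta$-derivation on $M_{\mathcal{F}_k}$ extending $D$, i.e. with $d^{(k)}_n\circ q_k=q_k\circ d_n$ for all $n$. Then these extensions agree: $q_{12}\circ d^{(1)}_n=d^{(2)}_n\circ q_{12}$ for every $n$.
   Context: A Gabriel filter $\mathcal{F}$ corresponds to a hereditary torsion theory with torsion class $\mathcal{T}=\{N\mid \mathrm{ann}(x)\in\mathcal{F}\ \text{for all } x\in N\}$; $\mathcal{T}(M)$ denotes the largest torsion submodule of $M$. The module of quotients $M_{\mathcal{F}}$ is the largest submodule $N$ of the injective envelope $E(M/\mathcal{T}(M))$ with $N/(M/\mathcal{T}(M))$ torsion, and $q_M:M\to M_{\mathcal{F}}$ is the projection $M\to M/\mathcal{T}(M)$ followed by inclusion. Here $q_k=q_M:M\to M_{\mathcal{F}_k}$, and $q_{12}:M_{\mathcal{F}_1}\to M_{\mathcal{F}_2}$ is the canonical map induced by the inclusion $\mathcal{F}_1\subseteq\mathcal{F}_2$, satisfying $q_{12}q_1=q_2$. A higher derivation on $R$ is a family $\{\delta_n\}$ of additive maps with $\delta_0=\mathrm{id}_R$ and $\delta_n(rs)=\sum_{i=0}^n\delta_i(r)\delta_{n-i}(s)$;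 a higher $\Delta$-derivation on a right module $N$ is a family $\{d_n\}$ of additive maps with $d_0=\mathrm{id}_N$ and $d_n(xr)=\sum_{i=0}^n d_i(x)\delta_{n-i}(r)$. Every higher $\Delta$-derivation on $M$ extends uniquely to a higher $\Delta$-derivation on $M_{\mathcal{F}}$ commuting with $q_M$. *)

theory Defs
  imports "HOL-Algebra.Ideal"
begin

record ('a, 'b) rmodule = "'b ring" +
  rsmult :: "'b \<Rightarrow> 'a \<Rightarrow> 'b"  (infixl \<open>\<odot>\<index>\<close> 70)

definition right_module :: "('a, 'm) ring_scheme \<Rightarrow> ('a, 'b, 'c) rmodule_scheme \<Rightarrow> bool" where
  "right_module R M \<longleftrightarrow> ring R \<and> abelian_group M \<and>
     (\<forall>x\<in>carrier M. \<forall>r\<in>carrier R. x \<odot>\<^bsub>M\<^esub> r \<in> carrier M) \<and>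
     (\<forall>x\<in>carrier M. \<forall>y\<in>carrier M. \<forall>r\<in>carrier R.
        (x \<oplus>\<^bsub>M\<^esub> y) \<odot>\<^bsub>M\<^esub> r = x \<odot>\<^bsub>M\<^esub> r \<oplus>\<^bsub>M\<^esub> y \<odot>\<^bsub>M\<^esub> r) \<and>
     (\<forall>x\<in>carrier M. \<forall>r\<in>carrier R. \<forall>s\<in>carrier R.
        x \<odot>\<^bsub>M\<^esub> (r \<oplus>\<^bsub>R\<^esub> s) = x \<odot>\<^bsub>M\<^esub> r \<oplus>\<^bsub>M\<^esub> x \<odot>\<^bsub>M\<^esub> s) \<and>
     (\<forall>x\<in>carrier M. \<forall>r\<in>carrier R. \<forall>s\<in>carrier R.
        x \<odot>\<^bsub>M\<^esub> (r \<otimes>\<^bsub>R\<^esub> s) = (x \<odot>\<^bsub>M\<^esub> r) \<odot>\<^bsub>M\<^esub> s) \<and>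
     (\<forall>x\<in>carrier M. x \<odot>\<^bsub>M\<^esub> \<one>\<^bsub>R\<^esub> = x)"

definition submodule :: "('a, 'm) ring_scheme \<Rightarrow> 'b set \<Rightarrow> ('a, 'b, 'c) rmodule_scheme \<Rightarrow> bool" where
  "submodule R S M \<longleftrightarrow> S \<subseteq> carrier M \<and> \<zero>\<^bsub>M\<^esub> \<in> S \<and>
     (\<forall>x\<in>S. \<forall>y\<in>S. x \<oplus>\<^bsub>M\<^esub> y \<in> S) \<and> (\<forall>x\<in>S. \<ominus>\<^bsub>M\<^esub> x \<in> S) \<and>
     (\<forall>x\<in>S. \<forall>r\<in>carrier R. x \<odot>\<^bsub>M\<^esub> r \<in> S)"

definition rmod_hom :: "('a, 'm) ring_scheme \<Rightarrow> ('a, 'b, 'c) rmodule_scheme \<Rightarrow> ('a, 'd, 'e) rmodule_scheme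
     \<Rightarrow> ('b \<Rightarrow> 'd) \<Rightarrow> bool" where
  "rmod_hom R M N f \<longleftrightarrow>
     (\<forall>x\<in>carrier M. f x \<in> carrier N) \<and>
     (\<forall>x\<in>carrier M. \<forall>y\<in>carrier M. f (x \<oplus>\<^bsub>M\<^esub> y) = f x \<oplus>\<^bsub>N\<^esub> f y) \<and>
     (\<forall>x\<in>carrier M. \<forall>r\<in>carrier R. f (x \<odot>\<^bsub>M\<^esub> r) = f x \<odot>\<^bsub>N\<^esub> r)"

definition right_ideal :: "'a set \<Rightarrow> ('a, 'm) ring_scheme \<Rightarrow> bool" where
  "right_ideal I R \<longleftrightarrow> additive_subgroup I R \<and> (\<forall>a\<in>I. \<forall>r\<in>carrier R. a \<otimes>\<^bsub>R\<^esub> r \<in> I)"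

definition rquot :: "('a, 'm) ring_scheme \<Rightarrow> 'a set \<Rightarrow> 'a \<Rightarrow> 'a set" where
  "rquot R I a = {r \<in> carrier R. a \<otimes>\<^bsub>R\<^esub> r \<in> I}"

definition gabriel_filter :: "('a, 'm) ring_scheme \<Rightarrow> 'a set set \<Rightarrow> bool" where
  "gabriel_filter R F \<longleftrightarrow>
     (\<forall>I\<in>F. right_ideal I R) \<and> carrier R \<in> F \<and>
     (\<forall>I\<in>F. \<forall>J. right_ideal J R \<and> I \<subseteq> J \<longrightarrow> J \<in> F) \<and>
     (\<forall>I\<in>F. \<forall>J\<in>F. I \<inter> J \<in> F) \<and>
     (\<forall>I\<in>F. \<forall>a\<in>carrier R. rquot R I a \<in> F) \<and>
     (\<forall>I J. right_ideal I R \<and> J \<in> F \<and> (\<forall>a\<in>J. rquot R I a \<in> F) \<longrightarrow> I \<in> F)"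

definition ann :: "('a, 'm) ring_scheme \<Rightarrow> ('a, 'b, 'c) rmodule_scheme \<Rightarrow> 'b \<Rightarrow> 'a set" where
  "ann R M x = {r \<in> carrier R. x \<odot>\<^bsub>M\<^esub> r = \<zero>\<^bsub>M\<^esub>}"

definition tors :: "('a, 'm) ring_scheme \<Rightarrow> 'a set set \<Rightarrow> ('a, 'b, 'c) rmodule_scheme \<Rightarrow> 'b set" where
  "tors R F M = {x \<in> carrier M. ann R M x \<in> F}"

definition essential :: "('a, 'm) ring_scheme \<Rightarrow> 'b set \<Rightarrow> ('a, 'b, 'c) rmodule_scheme \<Rightarrow> bool" where
  "essential R X E \<longleftrightarrow> submodule R X E \<and>
     (\<forall>S. submodule R S E \<and> S \<noteq> {\<zero>\<^bsub>E\<^esub>} \<longrightarrow> S \<inter> X \<noteq> {\<zero>\<^bsub>E\<^esub>})"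

text \<open>Injectivity (stated via Baer's criterion).\<close>
definition injective_mod :: "('a, 'm) ring_scheme \<Rightarrow> ('a, 'b, 'c) rmodule_scheme \<Rightarrow> bool" where
  "injective_mod R E \<longleftrightarrow> right_module R E \<and>
     (\<forall>I f. right_ideal I R \<and> (\<forall>a\<in>I. f a \<in> carrier E) \<and>
        (\<forall>a\<in>I. \<forall>b\<in>I. f (a \<oplus>\<^bsub>R\<^esub> b) = f a \<oplus>\<^bsub>E\<^esub> f b) \<and>
        (\<forall>a\<in>I. \<forall>r\<in>carrier R. f (a \<otimes>\<^bsub>R\<^esub> r) = f a \<odot>\<^bsub>E\<^esub> r)
      \<longrightarrow> (\<exists>e\<in>carrier E. \<forall>a\<in>I. f a = e \<odot>\<^bsub>E\<^esub> a))"

text \<open>(E, j) is an injective envelope of M/T(M), where j : M \<rightarrow> E is the projection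
  M \<rightarrow> M/T(M) followed by the inclusion: j is R-linear with kernel T(M),
  E is injective and j(M) is essential in E.\<close>
definition env_of_torsfree_quot ::
  "('a, 'm) ring_scheme \<Rightarrow> 'a set set \<Rightarrow> ('a, 'b, 'c) rmodule_scheme \<Rightarrow> ('a, 'd, 'e) rmodule_scheme
     \<Rightarrow> ('b \<Rightarrow> 'd) \<Rightarrow> bool" where
  "env_of_torsfree_quot R F M E j \<longleftrightarrow> injective_mod R E \<and> rmod_hom R M E j \<and>
     {x \<in> carrier M. j x = \<zero>\<^bsub>E\<^esub>} = tors R F M \<and> essential R (j ` carrier M) E"

text \<open>Carrier of M_F inside E: the largest submodule N of E with N/j(M) torsion.\<close>
definition quot_carrier ::
  "('a, 'm) ring_scheme \<Rightarrow> 'a set set \<Rightarrow> ('a, 'b, 'c) rmodule_scheme \<Rightarrow> ('a, 'd, 'e) rmodule_scheme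
     \<Rightarrow> ('b \<Rightarrow> 'd) \<Rightarrow> 'd set" where
  "quot_carrier R F M E j = {y \<in> carrier E. {r \<in> carrier R. y \<odot>\<^bsub>E\<^esub> r \<in> j ` carrier M} \<in> F}"

definition mod_of_quot ::
  "('a, 'm) ring_scheme \<Rightarrow> 'a set set \<Rightarrow> ('a, 'b, 'c) rmodule_scheme \<Rightarrow> ('a, 'd, 'e) rmodule_scheme
     \<Rightarrow> ('b \<Rightarrow> 'd) \<Rightarrow> ('a, 'd, 'e) rmodule_scheme" where
  "mod_of_quot R F M E j = E\<lparr>carrier := quot_carrier R F M E j\<rparr>"

definition higher_derivation :: "('a, 'm) ring_scheme \<Rightarrow> (nat \<Rightarrow> 'a \<Rightarrow> 'a) \<Rightarrow> bool" where
  "higher_derivation R \<delta> \<longleftrightarrow>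
     (\<forall>n. \<forall>r\<in>carrier R. \<delta> n r \<in> carrier R) \<and>
     (\<forall>n. \<forall>r\<in>carrier R. \<forall>s\<in>carrier R. \<delta> n (r \<oplus>\<^bsub>R\<^esub> s) = \<delta> n r \<oplus>\<^bsub>R\<^esub> \<delta> n s) \<and>
     (\<forall>r\<in>carrier R. \<delta> 0 r = r) \<and>
     (\<forall>n. \<forall>r\<in>carrier R. \<forall>s\<in>carrier R.
        \<delta> n (r \<otimes>\<^bsub>R\<^esub> s) = finsum R (\<lambda>i. \<delta> i r \<otimes>\<^bsub>R\<^esub> \<delta> (n - i) s) {..n})"

definition higher_delta_derivation ::
  "('a, 'm) ring_scheme \<Rightarrow> (nat \<Rightarrow> 'a \<Rightarrow> 'a) \<Rightarrow> ('a, 'b, 'c) rmodule_scheme \<Rightarrow> (nat \<Rightarrow> 'b \<Rightarrow> 'b) \<Rightarrow> bool" where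
  "higher_delta_derivation R \<delta> N d \<longleftrightarrow>
     (\<forall>n. \<forall>x\<in>carrier N. d n x \<in> carrier N) \<and>
     (\<forall>n. \<forall>x\<in>carrier N. \<forall>y\<in>carrier N. d n (x \<oplus>\<^bsub>N\<^esub> y) = d n x \<oplus>\<^bsub>N\<^esub> d n y) \<and>
     (\<forall>x\<in>carrier N. d 0 x = x) \<and>
     (\<forall>n. \<forall>x\<in>carrier N. \<forall>r\<in>carrier R.
        d n (x \<odot>\<^bsub>N\<^esub> r) = finsum N (\<lambda>i. d i x \<odot>\<^bsub>N\<^esub> \<delta> (n - i) r) {..n})"

end

theory Submission
  imports Defs
begin

lemma addsubI:
  assumes "abelian_group R" "H \<subseteq> carrier R" "\<zero>\<^bsub>R\<^esub> \<in> H"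
    "\<And>a. a\<in>H \<Longrightarrow> \<ominus>\<^bsub>R\<^esub> a \<in> H" "\<And>a b. a\<in>H \<Longrightarrow> b\<in>H \<Longrightarrow> a \<oplus>\<^bsub>R\<^esub> b \<in> H"
  shows "additive_subgroup H R"
proof -
  interpret abelian_group R by fact
  show ?thesis
    apply (rule additive_subgroupI)
    apply (rule add.subgroupI)
    using assms by auto
qed

lemma ag_idem_zero:
  assumes "abelian_group G" "a \<in> carrier G" "a \<oplus>\<^bsub>G\<^esub> a = a"
  shows "a = \<zero>\<^bsub>G\<^esub>"
proof -
  interpret abelian_group G by fact
  have "a \<oplus>\<^bsub>G\<^esub> a = a \<oplus>\<^bsub>G\<^esub> \<zero>\<^bsub>G\<^esub>" using assms by simp
  then show ?thesis using assms by simp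
qed

context
  fixes R :: "('a,'m) ring_scheme" and E :: "('a,'b,'c) rmodule_scheme"
  assumes RM: "right_module R E"
begin

lemma rm_ring: "ring R" and rm_ag: "abelian_group E"
  using RM by (auto simp: right_module_def)

lemma rm_closed: "x \<in> carrier E \<Longrightarrow> r \<in> carrier R \<Longrightarrow> x \<odot>\<^bsub>E\<^esub> r \<in> carrier E"
  and rm_ldist: "x \<in> carrier E \<Longrightarrow> y \<in> carrier E \<Longrightarrow> r \<in> carrier R \<Longrightarrow>
        (x \<oplus>\<^bsub>E\<^esub> y) \<odot>\<^bsub>E\<^esub> r = x \<odot>\<^bsub>E\<^esub> r \<oplus>\<^bsub>E\<^esub> y \<odot>\<^bsub>E\<^esub> r"
  and rm_rdist: "x \<in> carrier E \<Longrightarrow> r \<in> carrier R \<Longrightarrow> s \<in> carrier R \<Longrightarrow>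
        x \<odot>\<^bsub>E\<^esub> (r \<oplus>\<^bsub>R\<^esub> s) = x \<odot>\<^bsub>E\<^esub> r \<oplus>\<^bsub>E\<^esub> x \<odot>\<^bsub>E\<^esub> s"
  and rm_assoc: "x \<in> carrier E \<Longrightarrow> r \<in> carrier R \<Longrightarrow> s \<in> carrier R \<Longrightarrow>
        x \<odot>\<^bsub>E\<^esub> (r \<otimes>\<^bsub>R\<^esub> s) = (x \<odot>\<^bsub>E\<^esub> r) \<odot>\<^bsub>E\<^esub> s"
  and rm_one: "x \<in> carrier E \<Longrightarrow> x \<odot>\<^bsub>E\<^esub> \<one>\<^bsub>R\<^esub> = x"
  using RM by (auto simp: right_module_def)

lemma rm_zero_r: "x \<in> carrier E \<Longrightarrow> x \<odot>\<^bsub>E\<^esub> \<zero>\<^bsub>R\<^esub> = \<zero>\<^bsub>E\<^esub>"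
proof -
  assume x: "x \<in> carrier E"
  interpret R: ring R by (rule rm_ring)
  have "x \<odot>\<^bsub>E\<^esub> \<zero>\<^bsub>R\<^esub> \<oplus>\<^bsub>E\<^esub> x \<odot>\<^bsub>E\<^esub> \<zero>\<^bsub>R\<^esub> = x \<odot>\<^bsub>E\<^esub> \<zero>\<^bsub>R\<^esub>"
    using rm_rdist[OF x, of "\<zero>\<^bsub>R\<^esub>" "\<zero>\<^bsub>R\<^esub>"] by simp
  then show ?thesis using ag_idem_zero[OF rm_ag] rm_closed[OF x] by simp
qed

lemma rm_zero_l: "r \<in> carrier R \<Longrightarrow> \<zero>\<^bsub>E\<^esub> \<odot>\<^bsub>E\<^esub> r = \<zero>\<^bsub>E\<^esub>"
proof -
  assume r: "r \<in> carrier R"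
  interpret E: abelian_group E by (rule rm_ag)
  have "\<zero>\<^bsub>E\<^esub> \<odot>\<^bsub>E\<^esub> r \<oplus>\<^bsub>E\<^esub> \<zero>\<^bsub>E\<^esub> \<odot>\<^bsub>E\<^esub> r = \<zero>\<^bsub>E\<^esub> \<odot>\<^bsub>E\<^esub> r"
    using rm_ldist[of "\<zero>\<^bsub>E\<^esub>" "\<zero>\<^bsub>E\<^esub>" r] r by simp
  then show ?thesis using ag_idem_zero[OF rm_ag] rm_closed r by simp
qed

lemma rm_neg_r: "x \<in> carrier E \<Longrightarrow> r \<in> carrier R \<Longrightarrow> x \<odot>\<^bsub>E\<^esub> (\<ominus>\<^bsub>R\<^esub> r) = \<ominus>\<^bsub>E\<^esub> (x \<odot>\<^bsub>E\<^esub> r)"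
proof -
  assume x: "x \<in> carrier E" and r: "r \<in> carrier R"
  interpret R: ring R by (rule rm_ring)
  interpret E: abelian_group E by (rule rm_ag)
  have "x \<odot>\<^bsub>E\<^esub> (\<ominus>\<^bsub>R\<^esub> r) \<oplus>\<^bsub>E\<^esub> x \<odot>\<^bsub>E\<^esub> r = \<zero>\<^bsub>E\<^esub>"
    using rm_rdist[OF x, of "\<ominus>\<^bsub>R\<^esub> r" r] r rm_zero_r[OF x] by (simp add: R.l_neg)
  then show ?thesis using E.minus_equality rm_closed x r by (simp add: R.a_inv_closed)
qed

lemma rm_neg_l: "x \<in> carrier E \<Longrightarrow> r \<in> carrier R \<Longrightarrow> (\<ominus>\<^bsub>E\<^esub> x) \<odot>\<^bsub>E\<^esub> r = \<ominus>\<^bsub>E\<^esub> (x \<odot>\<^bsub>E\<^esub> r)"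
proof -
  assume x: "x \<in> carrier E" and r: "r \<in> carrier R"
  interpret E: abelian_group E by (rule rm_ag)
  have "(\<ominus>\<^bsub>E\<^esub> x) \<odot>\<^bsub>E\<^esub> r \<oplus>\<^bsub>E\<^esub> x \<odot>\<^bsub>E\<^esub> r = \<zero>\<^bsub>E\<^esub>"
    using rm_ldist[of "\<ominus>\<^bsub>E\<^esub> x" x r] r x rm_zero_l[OF r] by (simp add: E.l_neg)
  then show ?thesis using E.minus_equality rm_closed x r by simp
qed

lemma ann_right_ideal: "x \<in> carrier E \<Longrightarrow> right_ideal (ann R E x) R"
proof -
  assume x: "x \<in> carrier E"
  interpret R: ring R by (rule rm_ring)
  interpret E: abelian_group E by (rule rm_ag)
  show ?thesis unfolding right_ideal_def
  proof
    show "additive_subgroup (ann R E x) R"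
      by (rule addsubI) (auto simp: ann_def R.is_abelian_group rm_zero_r[OF x] rm_neg_r[OF x] rm_rdist[OF x])
    show "\<forall>a\<in>ann R E x. \<forall>r\<in>carrier R. a \<otimes>\<^bsub>R\<^esub> r \<in> ann R E x"
      by (auto simp: ann_def rm_assoc[OF x] rm_zero_l)
  qed
qed

end

lemma env_torsfree:
  fixes R :: "('a,'m) ring_scheme" and M :: "('a,'b,'c) rmodule_scheme"
    and E :: "('a,'d,'e) rmodule_scheme"
  assumes RM: "right_module R M" and GF: "gabriel_filter R F"
    and env: "env_of_torsfree_quot R F M E j" and y: "y \<in> carrier E"
    and an: "ann R E y \<in> F"
  shows "y = \<zero>\<^bsub>E\<^esub>"
proof (rule ccontr)
  assume ny: "y \<noteq> \<zero>\<^bsub>E\<^esub>"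
  have EM: "right_module R E" using env by (simp add: env_of_torsfree_quot_def injective_mod_def)
  interpret R: ring R by (rule rm_ring[OF RM])
  interpret E: abelian_group E by (rule rm_ag[OF EM])
  have jhom: "rmod_hom R M E j" using env by (simp add: env_of_torsfree_quot_def)
  have jc: "\<And>x. x \<in> carrier M \<Longrightarrow> j x \<in> carrier E"
    and jsm: "\<And>x r. x \<in> carrier M \<Longrightarrow> r \<in> carrier R \<Longrightarrow> j (x \<odot>\<^bsub>M\<^esub> r) = j x \<odot>\<^bsub>E\<^esub> r"
    using jhom by (auto simp: rmod_hom_def)
  have ker: "{x \<in> carrier M. j x = \<zero>\<^bsub>E\<^esub>} = tors R F M" using env by (simp add: env_of_torsfree_quot_def)
  have ess: "essential R (j ` carrier M) E" using env by (simp add: env_of_torsfree_quot_def)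
  define S where "S = {y \<odot>\<^bsub>E\<^esub> r | r. r \<in> carrier R}"
  have subS: "submodule R S E"
    unfolding submodule_def S_def
  proof (intro conjI ballI)
    show "{y \<odot>\<^bsub>E\<^esub> r |r. r \<in> carrier R} \<subseteq> carrier E" using rm_closed[OF EM y] by auto
    show "\<zero>\<^bsub>E\<^esub> \<in> {y \<odot>\<^bsub>E\<^esub> r |r. r \<in> carrier R}"
      using rm_zero_r[OF EM y] by (metis (mono_tags, lifting) R.zero_closed mem_Collect_eq)
  next
    fix a b assume "a \<in> {y \<odot>\<^bsub>E\<^esub> r |r. r \<in> carrier R}" "b \<in> {y \<odot>\<^bsub>E\<^esub> r |r. r \<in> carrier R}"
    then obtain r s where "a = y \<odot>\<^bsub>E\<^esub> r" "b = y \<odot>\<^bsub>E\<^esub> s" "r \<in> carrier R" "s \<in> carrier R" by auto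
    then show "a \<oplus>\<^bsub>E\<^esub> b \<in> {y \<odot>\<^bsub>E\<^esub> r |r. r \<in> carrier R}"
      using rm_rdist[OF EM y, of r s] by (metis (mono_tags, lifting) R.add.m_closed mem_Collect_eq)
  next
    fix a assume "a \<in> {y \<odot>\<^bsub>E\<^esub> r |r. r \<in> carrier R}"
    then obtain r where "a = y \<odot>\<^bsub>E\<^esub> r" "r \<in> carrier R" by auto
    then show "\<ominus>\<^bsub>E\<^esub> a \<in> {y \<odot>\<^bsub>E\<^esub> r |r. r \<in> carrier R}"
      using rm_neg_r[OF EM y, of r] by (metis (mono_tags, lifting) R.add.inv_closed mem_Collect_eq)
  next
    fix a s assume "a \<in> {y \<odot>\<^bsub>E\<^esub> r |r. r \<in> carrier R}" "s \<in> carrier R"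
    then obtain r where "a = y \<odot>\<^bsub>E\<^esub> r" "r \<in> carrier R" by auto
    then show "a \<odot>\<^bsub>E\<^esub> s \<in> {y \<odot>\<^bsub>E\<^esub> r |r. r \<in> carrier R}"
      using rm_assoc[OF EM y, of r s] \<open>s \<in> carrier R\<close> by (metis (mono_tags, lifting) R.m_closed mem_Collect_eq)
  qed
  have "y \<in> S" unfolding S_def using rm_one[OF EM y] by (metis (mono_tags, lifting) R.one_closed mem_Collect_eq)
  then have "S \<noteq> {\<zero>\<^bsub>E\<^esub>}" using ny by auto
  then have "S \<inter> j ` carrier M \<noteq> {\<zero>\<^bsub>E\<^esub>}" using ess subS by (auto simp: essential_def)
  moreover have "\<zero>\<^bsub>E\<^esub> \<in> S \<inter> j ` carrier M"
  proof -
    have "\<zero>\<^bsub>E\<^esub> \<in> S" using subS by (simp add: submodule_def)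
    moreover have "\<zero>\<^bsub>E\<^esub> \<in> j ` carrier M" using ess by (simp add: essential_def submodule_def)
    ultimately show ?thesis by simp
  qed
  ultimately obtain z where z: "z \<in> S" "z \<in> j ` carrier M" "z \<noteq> \<zero>\<^bsub>E\<^esub>" by blast
  from z(1) obtain r where r: "r \<in> carrier R" and zr: "z = y \<odot>\<^bsub>E\<^esub> r"
    unfolding S_def by blast
  from z(2) obtain m where m: "m \<in> carrier M" and zm: "z = j m" by blast
  have gf: "\<forall>I J. right_ideal I R \<and> J \<in> F \<and> (\<forall>a\<in>J. rquot R I a \<in> F) \<longrightarrow> I \<in> F"
    and gq: "\<forall>I\<in>F. \<forall>a\<in>carrier R. rquot R I a \<in> F"
    using GF unfolding gabriel_filter_def by blast+
  have J: "rquot R (ann R E y) r \<in> F" using gq an r by blast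
  have "ann R M m \<in> F"
  proof (rule gf[rule_format], intro conjI)
    show "right_ideal (ann R M m) R" by (rule ann_right_ideal[OF RM m])
    show "rquot R (ann R E y) r \<in> F" by (rule J)
    show "\<forall>a\<in>rquot R (ann R E y) r. rquot R (ann R M m) a \<in> F"
    proof
      fix a assume a: "a \<in> rquot R (ann R E y) r"
      then have ac: "a \<in> carrier R" and ya: "y \<odot>\<^bsub>E\<^esub> (r \<otimes>\<^bsub>R\<^esub> a) = \<zero>\<^bsub>E\<^esub>"
        by (auto simp: rquot_def ann_def)
      have "j (m \<odot>\<^bsub>M\<^esub> a) = \<zero>\<^bsub>E\<^esub>"
        using jsm[OF m ac] zm zr rm_assoc[OF EM y r ac] ya by simp
      then have "m \<odot>\<^bsub>M\<^esub> a \<in> tors R F M" using ker rm_closed[OF RM m ac] by blast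
      then have "ann R M (m \<odot>\<^bsub>M\<^esub> a) \<in> F" by (simp add: tors_def)
      moreover have "rquot R (ann R M m) a = ann R M (m \<odot>\<^bsub>M\<^esub> a)"
        using rm_assoc[OF RM m ac] ac by (auto simp: rquot_def ann_def)
      ultimately show "rquot R (ann R M m) a \<in> F" by simp
    qed
  qed
  then have "m \<in> tors R F M" using m by (simp add: tors_def)
  then have "j m = \<zero>\<^bsub>E\<^esub>" using ker by blast
  then show False using z zm by simp
qed

lemma quot_facts:
  fixes R :: "('a,'m) ring_scheme" and M :: "('a,'b,'c) rmodule_scheme"
    and E :: "('a,'d,'e) rmodule_scheme"
  assumes RM: "right_module R M" and GF: "gabriel_filter R F"
    and env: "env_of_torsfree_quot R F M E j"
  shows "abelian_group (mod_of_quot R F M E j)" and "quot_carrier R F M E j \<subseteq> carrier E"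
    and "\<And>y r. y \<in> quot_carrier R F M E j \<Longrightarrow> r \<in> carrier R \<Longrightarrow> y \<odot>\<^bsub>E\<^esub> r \<in> quot_carrier R F M E j"
proof -
  have EM: "right_module R E" using env by (simp add: env_of_torsfree_quot_def injective_mod_def)
  interpret R: ring R by (rule rm_ring[OF RM])
  interpret E: abelian_group E by (rule rm_ag[OF EM])
  have ess: "essential R (j ` carrier M) E" using env by (simp add: env_of_torsfree_quot_def)
  then have sub: "submodule R (j ` carrier M) E" by (simp add: essential_def)
  let ?J = "j ` carrier M"
  have J0: "\<zero>\<^bsub>E\<^esub> \<in> ?J" and Jadd: "\<And>a b. a \<in> ?J \<Longrightarrow> b \<in> ?J \<Longrightarrow> a \<oplus>\<^bsub>E\<^esub> b \<in> ?J"
    and Jneg: "\<And>a. a \<in> ?J \<Longrightarrow> \<ominus>\<^bsub>E\<^esub> a \<in> ?J"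
    and Jsm: "\<And>a r. a \<in> ?J \<Longrightarrow> r \<in> carrier R \<Longrightarrow> a \<odot>\<^bsub>E\<^esub> r \<in> ?J"
    and Jc: "?J \<subseteq> carrier E"
    using sub unfolding submodule_def by blast+
  have gup: "\<And>I J. I \<in> F \<Longrightarrow> right_ideal J R \<Longrightarrow> I \<subseteq> J \<Longrightarrow> J \<in> F"
    and gint: "\<And>I J. I \<in> F \<Longrightarrow> J \<in> F \<Longrightarrow> I \<inter> J \<in> F"
    and gR: "carrier R \<in> F" and gq: "\<And>I a. I \<in> F \<Longrightarrow> a \<in> carrier R \<Longrightarrow> rquot R I a \<in> F"
    using GF unfolding gabriel_filter_def by blast+
  define Iy where "Iy y = {r \<in> carrier R. y \<odot>\<^bsub>E\<^esub> r \<in> ?J}" for y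
  have Iy_ri: "right_ideal (Iy y) R" if y: "y \<in> carrier E" for y
    unfolding right_ideal_def
  proof
    show "additive_subgroup (Iy y) R"
      by (rule addsubI) (auto simp: Iy_def R.is_abelian_group rm_zero_r[OF EM y] rm_neg_r[OF EM y]
          rm_rdist[OF EM y] J0 Jadd Jneg)
    show "\<forall>a\<in>Iy y. \<forall>r\<in>carrier R. a \<otimes>\<^bsub>R\<^esub> r \<in> Iy y"
      by (auto simp: Iy_def rm_assoc[OF EM y] Jsm)
  qed
  have Q: "quot_carrier R F M E j = {y \<in> carrier E. Iy y \<in> F}"
    by (simp add: quot_carrier_def Iy_def)
  show Qc: "quot_carrier R F M E j \<subseteq> carrier E" by (auto simp: Q)
  have Q0: "\<zero>\<^bsub>E\<^esub> \<in> quot_carrier R F M E j"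
  proof -
    have "Iy \<zero>\<^bsub>E\<^esub> = carrier R" by (auto simp: Iy_def rm_zero_l[OF EM] J0)
    then show ?thesis using gR by (simp add: Q)
  qed
  have Qadd: "y \<oplus>\<^bsub>E\<^esub> z \<in> quot_carrier R F M E j"
    if y: "y \<in> quot_carrier R F M E j" and z: "z \<in> quot_carrier R F M E j" for y z
  proof -
    have yc: "y \<in> carrier E" and zc: "z \<in> carrier E" and yF: "Iy y \<in> F" and zF: "Iy z \<in> F"
      using y z by (auto simp: Q)
    have "Iy y \<inter> Iy z \<subseteq> Iy (y \<oplus>\<^bsub>E\<^esub> z)"
      by (auto simp: Iy_def rm_ldist[OF EM yc zc] Jadd)
    then have "Iy (y \<oplus>\<^bsub>E\<^esub> z) \<in> F"
      using gup[OF gint[OF yF zF] Iy_ri] yc zc by simp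
    then show ?thesis using yc zc by (simp add: Q)
  qed
  have Qneg: "\<ominus>\<^bsub>E\<^esub> y \<in> quot_carrier R F M E j" if y: "y \<in> quot_carrier R F M E j" for y
  proof -
    have yc: "y \<in> carrier E" and yF: "Iy y \<in> F" using y by (auto simp: Q)
    have "Iy y \<subseteq> Iy (\<ominus>\<^bsub>E\<^esub> y)"
      by (auto simp: Iy_def rm_neg_l[OF EM yc] Jneg)
    then have "Iy (\<ominus>\<^bsub>E\<^esub> y) \<in> F" using gup[OF yF Iy_ri] yc by simp
    then show ?thesis using yc by (simp add: Q)
  qed
  show "y \<odot>\<^bsub>E\<^esub> r \<in> quot_carrier R F M E j" if y: "y \<in> quot_carrier R F M E j" and r: "r \<in> carrier R" for y r
  proof -
    have yc: "y \<in> carrier E" and yF: "Iy y \<in> F" using y by (auto simp: Q)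
    have "Iy (y \<odot>\<^bsub>E\<^esub> r) = rquot R (Iy y) r"
      using r by (auto simp: Iy_def rquot_def rm_assoc[OF EM yc])
    then show ?thesis using gq[OF yF r] rm_closed[OF EM yc r] by (simp add: Q)
  qed
  show "abelian_group (mod_of_quot R F M E j)"
    unfolding mod_of_quot_def
  proof (rule abelian_groupI, goal_cases)
    case (1 x y) then show ?case using Qadd by simp
  next
    case 2 then show ?case using Q0 by simp
  next
    case (3 x y z) then show ?case using Qc by (simp add: subset_iff E.a_assoc)
  next
    case (4 x y) then show ?case using Qc by (simp add: subset_iff E.a_comm)
  next
    case (5 x) then show ?case using Qc by (simp add: subset_iff)
  next
    case (6 x) then show ?case using Qc Qneg by (auto simp: subset_iff intro!: bexI[of _ "\<ominus>\<^bsub>E\<^esub> x"] E.l_neg)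
  qed
qed

lemma hom_finsum:
  fixes n :: nat
  assumes G: "abelian_group G" and H: "abelian_group H"
    and hc: "\<And>x. x \<in> carrier G \<Longrightarrow> h x \<in> carrier H"
    and ha: "\<And>x y. x \<in> carrier G \<Longrightarrow> y \<in> carrier G \<Longrightarrow> h (x \<oplus>\<^bsub>G\<^esub> y) = h x \<oplus>\<^bsub>H\<^esub> h y"
  shows "f \<in> {..n} \<rightarrow> carrier G \<Longrightarrow> h (finsum G f {..n}) = finsum H (\<lambda>i. h (f i)) {..n}"
proof -
  interpret G: abelian_group G by fact
  interpret H: abelian_group H by fact
  show "f \<in> {..n} \<rightarrow> carrier G \<Longrightarrow> ?thesis"
  proof (induction n)
  case 0 then show ?case using hc by (simp add: Pi_def)
next
  case (Suc n)
  then have f: "f \<in> {..n} \<rightarrow> carrier G" "f (Suc n) \<in> carrier G" by auto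
  have "h (finsum G f {..Suc n}) = h (f (Suc n) \<oplus>\<^bsub>G\<^esub> finsum G f {..n})"
    using Suc.prems by simp
  also have "\<dots> = h (f (Suc n)) \<oplus>\<^bsub>H\<^esub> finsum H (\<lambda>i. h (f i)) {..n}"
    using ha f Suc.IH G.finsum_closed by simp
  also have "\<dots> = finsum H (\<lambda>i. h (f i)) {..Suc n}"
    using Suc.prems hc by (simp add: Pi_def)
  finally show ?case .
  qed
qed

theorem corollary4p1:
  fixes R :: "'a ring" and F1 F2 :: "'a set set" and \<delta> :: "nat \<Rightarrow> 'a \<Rightarrow> 'a"
    and M :: "('a, 'b) rmodule" and d :: "nat \<Rightarrow> 'b \<Rightarrow> 'b"
    and E1 :: "('a, 'c) rmodule" and j1 :: "'b \<Rightarrow> 'c" and d1 :: "nat \<Rightarrow> 'c \<Rightarrow> 'c"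
    and E2 :: "('a, 'e) rmodule" and j2 :: "'b \<Rightarrow> 'e" and d2 :: "nat \<Rightarrow> 'e \<Rightarrow> 'e"
    and q12 :: "'c \<Rightarrow> 'e"
  assumes "ring R"
    and "gabriel_filter R F1" and "gabriel_filter R F2" and "F1 \<subseteq> F2"
    and "higher_derivation R \<delta>"
    and "right_module R M" and "higher_delta_derivation R \<delta> M d"
    and "env_of_torsfree_quot R F1 M E1 j1"
    and "env_of_torsfree_quot R F2 M E2 j2"
    and "rmod_hom R (mod_of_quot R F1 M E1 j1) (mod_of_quot R F2 M E2 j2) q12"
    and "\<forall>x\<in>carrier M. q12 (j1 x) = j2 x"
    and "higher_delta_derivation R \<delta> (mod_of_quot R F1 M E1 j1) d1"
    and "\<forall>n. \<forall>x\<in>carrier M. d1 n (j1 x) = j1 (d n x)"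
    and "higher_delta_derivation R \<delta> (mod_of_quot R F2 M E2 j2) d2"
    and "\<forall>n. \<forall>x\<in>carrier M. d2 n (j2 x) = j2 (d n x)"
  shows "\<forall>n. \<forall>x\<in>quot_carrier R F1 M E1 j1. q12 (d1 n x) = d2 n (q12 x)"
proof -
  note A = assms
  let ?N1 = "mod_of_quot R F1 M E1 j1" and ?N2 = "mod_of_quot R F2 M E2 j2"
  let ?Q1 = "quot_carrier R F1 M E1 j1" and ?Q2 = "quot_carrier R F2 M E2 j2"
  have N1c: "carrier ?N1 = ?Q1" and N2c: "carrier ?N2 = ?Q2"
    and N1a: "add ?N1 = add E1" and N2a: "add ?N2 = add E2"
    and N1s: "rsmult ?N1 = rsmult E1" and N2s: "rsmult ?N2 = rsmult E2"
    by (simp_all add: mod_of_quot_def)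
  have ag1: "abelian_group ?N1" and Q1c: "?Q1 \<subseteq> carrier E1"
    using quot_facts[OF A(6) A(2) A(8)] by auto
  have ag2: "abelian_group ?N2" and Q2c: "?Q2 \<subseteq> carrier E2"
    using quot_facts[OF A(6) A(3) A(9)] by auto
  have E2M: "right_module R E2" using A(9) by (simp add: env_of_torsfree_quot_def injective_mod_def)
  interpret R: ring R by fact
  interpret E2: abelian_group E2 by (rule rm_ag[OF E2M])
  interpret N2: abelian_group ?N2 by (rule ag2)
  have j1c: "\<And>m. m \<in> carrier M \<Longrightarrow> j1 m \<in> ?Q1"
  proof -
    fix m assume m: "m \<in> carrier M"
    have "j1 m \<in> carrier E1" using A(8) m by (auto simp: env_of_torsfree_quot_def rmod_hom_def)
    have sub: "submodule R (j1 ` carrier M) E1"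
      using A(8) by (simp add: env_of_torsfree_quot_def essential_def)
    have "{r \<in> carrier R. j1 m \<odot>\<^bsub>E1\<^esub> r \<in> j1 ` carrier M} = carrier R"
      using sub m unfolding submodule_def by blast
    moreover have "carrier R \<in> F1" using A(2) unfolding gabriel_filter_def by blast
    ultimately show "j1 m \<in> ?Q1" using \<open>j1 m \<in> carrier E1\<close>
      unfolding quot_carrier_def by simp
  qed
  have qc: "\<And>x. x \<in> ?Q1 \<Longrightarrow> q12 x \<in> ?Q2"
    and qa: "\<And>x y. x \<in> ?Q1 \<Longrightarrow> y \<in> ?Q1 \<Longrightarrow> q12 (x \<oplus>\<^bsub>E1\<^esub> y) = q12 x \<oplus>\<^bsub>E2\<^esub> q12 y"
    and qs: "\<And>x r. x \<in> ?Q1 \<Longrightarrow> r \<in> carrier R \<Longrightarrow> q12 (x \<odot>\<^bsub>E1\<^esub> r) = q12 x \<odot>\<^bsub>E2\<^esub> r"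
    using A(10) unfolding rmod_hom_def N1c N2c N1a N2a N1s N2s by blast+
  have d1c: "\<And>n x. x \<in> ?Q1 \<Longrightarrow> d1 n x \<in> ?Q1"
    and d1s: "\<And>n x r. x \<in> ?Q1 \<Longrightarrow> r \<in> carrier R \<Longrightarrow>
       d1 n (x \<odot>\<^bsub>E1\<^esub> r) = finsum ?N1 (\<lambda>i. d1 i x \<odot>\<^bsub>E1\<^esub> \<delta> (n - i) r) {..n}"
    using A(12) unfolding higher_delta_derivation_def N1c N1s by blast+
  have d2c: "\<And>n x. x \<in> ?Q2 \<Longrightarrow> d2 n x \<in> ?Q2"
    and d2s: "\<And>n x r. x \<in> ?Q2 \<Longrightarrow> r \<in> carrier R \<Longrightarrow>
       d2 n (x \<odot>\<^bsub>E2\<^esub> r) = finsum ?N2 (\<lambda>i. d2 i x \<odot>\<^bsub>E2\<^esub> \<delta> (n - i) r) {..n}"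
    using A(14) unfolding higher_delta_derivation_def N2c N2s by blast+
  have dc: "\<And>n m. m \<in> carrier M \<Longrightarrow> d n m \<in> carrier M"
    using A(7) unfolding higher_delta_derivation_def by blast
  have \<delta>c: "\<And>n r. r \<in> carrier R \<Longrightarrow> \<delta> n r \<in> carrier R" and \<delta>0: "\<And>r. r \<in> carrier R \<Longrightarrow> \<delta> 0 r = r"
    using A(5) unfolding higher_derivation_def by blast+
  have Q1sm: "\<And>x r. x \<in> ?Q1 \<Longrightarrow> r \<in> carrier R \<Longrightarrow> x \<odot>\<^bsub>E1\<^esub> r \<in> ?Q1"
    using quot_facts(3)[OF A(6) A(2) A(8)] by blast
  have Q2sm: "\<And>x r. x \<in> ?Q2 \<Longrightarrow> r \<in> carrier R \<Longrightarrow> x \<odot>\<^bsub>E2\<^esub> r \<in> ?Q2"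
    using quot_facts(3)[OF A(6) A(3) A(9)] by blast
  have main: "\<And>x. x \<in> ?Q1 \<Longrightarrow> q12 (d1 n x) = d2 n (q12 x)" for n
  proof (induction n rule: less_induct)
    case (less n x)
    note x = less.prems
    define a where "a i = q12 (d1 i x)" for i
    define b where "b i = d2 i (q12 x)" for i
    have ac: "\<And>i. a i \<in> ?Q2" and bc: "\<And>i. b i \<in> ?Q2"
      using qc d1c d2c x by (auto simp: a_def b_def)
    have aE: "\<And>i. a i \<in> carrier E2" and bE: "\<And>i. b i \<in> carrier E2" using ac bc Q2c by blast+
    have ab: "\<And>i. i < n \<Longrightarrow> a i = b i" using less.IH x by (simp add: a_def b_def)
    define I where "I = {r \<in> carrier R. x \<odot>\<^bsub>E1\<^esub> r \<in> j1 ` carrier M}"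
    have IF: "I \<in> F2" using x A(4) by (auto simp: I_def quot_carrier_def)
    have key: "a n \<odot>\<^bsub>E2\<^esub> r = b n \<odot>\<^bsub>E2\<^esub> r" if r: "r \<in> I" for r
    proof -
      have rc: "r \<in> carrier R" using r by (simp add: I_def)
      obtain m where m: "m \<in> carrier M" and xr: "x \<odot>\<^bsub>E1\<^esub> r = j1 m" using r by (auto simp: I_def)
      define ga where "ga i = a i \<odot>\<^bsub>E2\<^esub> \<delta> (n - i) r" for i
      define gb where "gb i = b i \<odot>\<^bsub>E2\<^esub> \<delta> (n - i) r" for i
      have gac: "ga \<in> UNIV \<rightarrow> carrier ?N2" and gbc: "gb \<in> UNIV \<rightarrow> carrier ?N2"
        using ac bc Q2sm \<delta>c rc by (auto simp: ga_def gb_def N2c)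
      have "q12 (d1 n (x \<odot>\<^bsub>E1\<^esub> r)) = q12 (finsum ?N1 (\<lambda>i. d1 i x \<odot>\<^bsub>E1\<^esub> \<delta> (n - i) r) {..n})"
        using d1s[OF x rc] by simp
      also have "\<dots> = finsum ?N2 (\<lambda>i. q12 (d1 i x \<odot>\<^bsub>E1\<^esub> \<delta> (n - i) r)) {..n}"
        by (rule hom_finsum[OF ag1 ag2])
           (use qc qa Q1sm d1c \<delta>c rc x in \<open>auto simp: N1c N1a N2c N2a\<close>)
      also have "(\<lambda>i. q12 (d1 i x \<odot>\<^bsub>E1\<^esub> \<delta> (n - i) r)) = ga"
        using qs d1c x \<delta>c rc by (auto simp: ga_def a_def)
      finally have L: "q12 (d1 n (x \<odot>\<^bsub>E1\<^esub> r)) = finsum ?N2 ga {..n}" .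
      have "q12 (d1 n (x \<odot>\<^bsub>E1\<^esub> r)) = j2 (d n m)"
        using xr m A(11) A(13) dc by simp
      moreover have "d2 n (q12 x \<odot>\<^bsub>E2\<^esub> r) = j2 (d n m)"
      proof -
        have "q12 x \<odot>\<^bsub>E2\<^esub> r = j2 m" using qs[OF x rc] xr m A(11) by simp
        then show ?thesis using m A(15) by simp
      qed
      moreover have "d2 n (q12 x \<odot>\<^bsub>E2\<^esub> r) = finsum ?N2 gb {..n}"
        using d2s[OF qc[OF x] rc] by (simp add: gb_def[abs_def] b_def)
      ultimately have eq: "finsum ?N2 ga {..n} = finsum ?N2 gb {..n}" using L by simp
      have split: "finsum ?N2 g {..n} = g n \<oplus>\<^bsub>?N2\<^esub> finsum ?N2 g {..<n}"
        if g: "g \<in> UNIV \<rightarrow> carrier ?N2" for g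
      proof -
        have "{..n} = insert n {..<n}" by auto
        moreover have "finsum ?N2 g (insert n {..<n}) = g n \<oplus>\<^bsub>?N2\<^esub> finsum ?N2 g {..<n}"
          by (rule N2.finsum_insert) (use g in auto)
        ultimately show ?thesis by simp
      qed
      have "finsum ?N2 ga {..<n} = finsum ?N2 gb {..<n}"
        by (rule N2.finsum_cong') (use gbc ab in \<open>auto simp: ga_def gb_def\<close>)
      then have eqn: "ga n \<oplus>\<^bsub>?N2\<^esub> finsum ?N2 gb {..<n} = gb n \<oplus>\<^bsub>?N2\<^esub> finsum ?N2 gb {..<n}"
        using eq split[OF gac] split[OF gbc] by simp
      then have "ga n = gb n"
      proof -
        have c: "finsum ?N2 gb {..<n} \<in> carrier ?N2" by (rule N2.finsum_closed) (use gbc in auto)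
        have g1: "ga n \<in> carrier ?N2" and g2: "gb n \<in> carrier ?N2" using gac gbc by auto
        show ?thesis using iffD1[OF N2.add.right_cancel[OF c g1 g2] eqn] .
      qed
      then show ?thesis using \<delta>0[OF rc] by (simp add: ga_def gb_def)
    qed
    define y where "y = a n \<ominus>\<^bsub>E2\<^esub> b n"
    have yc: "y \<in> carrier E2" using aE bE by (simp add: y_def)
    have "I \<subseteq> ann R E2 y"
    proof
      fix r assume r: "r \<in> I"
      then have rc: "r \<in> carrier R" by (simp add: I_def)
      have "y \<odot>\<^bsub>E2\<^esub> r = a n \<odot>\<^bsub>E2\<^esub> r \<oplus>\<^bsub>E2\<^esub> \<ominus>\<^bsub>E2\<^esub> (b n \<odot>\<^bsub>E2\<^esub> r)"
        using rm_ldist[OF E2M aE E2.a_inv_closed[OF bE] rc] rm_neg_l[OF E2M bE rc]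
        by (simp add: y_def E2.minus_eq)
      also have "\<dots> = \<zero>\<^bsub>E2\<^esub>" using key[OF r] rm_closed[OF E2M bE rc] by (simp add: E2.r_neg)
      finally show "r \<in> ann R E2 y" using rc by (simp add: ann_def)
    qed
    then have "ann R E2 y \<in> F2"
      using A(3) IF ann_right_ideal[OF E2M yc] unfolding gabriel_filter_def by blast
    then have "y = \<zero>\<^bsub>E2\<^esub>" by (rule env_torsfree[OF A(6) A(3) A(9) yc])
    then have "a n = b n"
      using aE bE by (metis E2.add.inv_closed E2.add.inv_inv E2.minus_equality E2.minus_eq y_def)
    then show ?case by (simp add: a_def b_def)
  qed
  show ?thesis using main by blast
qed

end
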